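(* Let $H$ be a Kekul\'ean hexagonal system and $n\ge0$. The map $f$ from the set of Clar covers of $H$ with exactly $n$ hexagons to the set of induced subgraphs of $R(H)$ isomorphic to $Q_n$ is injective.
   Context: A hexagonal system is a 2-connected finite plane graph in which every interior face is a regular hexagon of side length one; its hexagons are the boundaries of its interior faces; it is Kekul\'ean if it has a perfect matching. A Clar cover of $H$ is a spanning subgraph each of whose components is a hexagon of $H$ or a single edge. The resonance graph $R(H)$ has the perfect matchings of $H$ as vertices, two adjacent iff their symmetric difference is the edge set of a hexagon of $H$. For a Clar cover $C$, $f(C)$ denotes the subgraph of $R(H)$ induced by all perfect matchings $M$ of $H$ such that every hexagon component of $C$ is $M$-alternating and every single-edge component of $C$ belongs to $M$; for $C$ with $n$ hexagons, $f(C)$ is an induced subgraph of $R(H)$ isomorphic to the $n$-cube $Q_n$. *)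

theory Defs
  imports Main
begin

text \<open>The hexagonal (honeycomb) lattice, in its standard brick-wall drawing.
Vertices are integer points; every horizontal unit segment is an edge and the
vertical unit segment from (x,y) to (x,y+1) is an edge iff x+y is even.
The bounded faces (cells) of this lattice are the 2-by-1 bricks whose lower-left
corner (x,y) has x+y even; each is a hexagon (6-cycle).  Up to a homeomorphism of
the plane this is exactly the regular hexagonal tiling with unit sides.\<close>

type_synonym vert = "int \<times> int"
type_synonym cell = "int \<times> int"

definition is_cell :: "cell \<Rightarrow> bool" where
  "is_cell c \<longleftrightarrow> even (fst c + snd c)"

definition cell_cycle :: "cell \<Rightarrow> vert list" where
  "cell_cycle c = (let x = fst c; y = snd c in
     [(x,y), (x+1,y), (x+2,y), (x+2,y+1), (x+1,y+1), (x,y+1)])"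

definition cell_verts :: "cell \<Rightarrow> vert set" where
  "cell_verts c = set (cell_cycle c)"

definition cell_edge :: "cell \<Rightarrow> nat \<Rightarrow> vert set" where
  "cell_edge c i = {cell_cycle c ! (i mod 6), cell_cycle c ! (Suc i mod 6)}"

definition cell_edges :: "cell \<Rightarrow> vert set set" where
  "cell_edges c = {cell_edge c i | i. i < 6}"

definition hs_verts :: "cell set \<Rightarrow> vert set" where
  "hs_verts S = (\<Union>c\<in>S. cell_verts c)"

definition hs_edges :: "cell set \<Rightarrow> vert set set" where
  "hs_edges S = (\<Union>c\<in>S. cell_edges c)"

text \<open>Graph connectivity and 2-connectivity (edges are 2-element vertex sets).\<close>
definition edge_rel :: "vert set set \<Rightarrow> (vert \<times> vert) set" where
  "edge_rel E = {(a,b). {a,b} \<in> E \<and> a \<noteq> b}"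

definition connected_graph :: "vert set \<Rightarrow> vert set set \<Rightarrow> bool" where
  "connected_graph V E \<longleftrightarrow>
     (\<forall>u\<in>V. \<forall>v\<in>V. (u,v) \<in> (edge_rel {e\<in>E. e \<subseteq> V})\<^sup>*)"

definition two_connected :: "vert set \<Rightarrow> vert set set \<Rightarrow> bool" where
  "two_connected V E \<longleftrightarrow> finite V \<and> card V \<ge> 3 \<and> connected_graph V E \<and>
     (\<forall>x\<in>V. connected_graph (V - {x}) {e\<in>E. x \<notin> e})"

definition cells_adj :: "cell \<Rightarrow> cell \<Rightarrow> bool" where
  "cells_adj c d \<longleftrightarrow> c \<noteq> d \<and> cell_edges c \<inter> cell_edges d \<noteq> {}"

text \<open>A hexagonal system, given by its set S of hexagons (interior faces).
The graph is 2-connected and every bounded face of it is one of the cells in S: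
equivalently the cells outside S form one edge-connected region (no holes).\<close>
definition hexagonal_system :: "cell set \<Rightarrow> bool" where
  "hexagonal_system S \<longleftrightarrow> finite S \<and> S \<noteq> {} \<and> (\<forall>c\<in>S. is_cell c) \<and>
     two_connected (hs_verts S) (hs_edges S) \<and>
     (\<forall>c d. is_cell c \<and> is_cell d \<and> c \<notin> S \<and> d \<notin> S \<longrightarrow>
        (c,d) \<in> {(a,b). is_cell a \<and> is_cell b \<and> a \<notin> S \<and> b \<notin> S \<and> cells_adj a b}\<^sup>*)"

definition perfect_matching :: "cell set \<Rightarrow> vert set set \<Rightarrow> bool" where
  "perfect_matching S M \<longleftrightarrow> M \<subseteq> hs_edges S \<and>
     (\<forall>v\<in>hs_verts S. \<exists>!e. e \<in> M \<and> v \<in> e)"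

definition kekulean :: "cell set \<Rightarrow> bool" where
  "kekulean S \<longleftrightarrow> (\<exists>M. perfect_matching S M)"

definition alternating :: "vert set set \<Rightarrow> cell \<Rightarrow> bool" where
  "alternating M h \<longleftrightarrow> (\<forall>i<6. cell_edge h i \<in> M \<longleftrightarrow> cell_edge h (Suc i) \<notin> M)"

definition comp :: "vert set set \<Rightarrow> vert \<Rightarrow> vert set" where
  "comp C v = {u. (v,u) \<in> (edge_rel C)\<^sup>*}"

definition comp_edges :: "vert set set \<Rightarrow> vert \<Rightarrow> vert set set" where
  "comp_edges C v = {e\<in>C. e \<subseteq> comp C v}"

definition clar_cover :: "cell set \<Rightarrow> vert set set \<Rightarrow> bool" where
  "clar_cover S C \<longleftrightarrow> C \<subseteq> hs_edges S \<and>
     (\<forall>v\<in>hs_verts S.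
        (\<exists>h\<in>S. comp C v = cell_verts h \<and> comp_edges C v = cell_edges h) \<or>
        (\<exists>a b. a \<noteq> b \<and> comp C v = {a,b} \<and> comp_edges C v = {{a,b}}))"

definition clar_hexagons :: "cell set \<Rightarrow> vert set set \<Rightarrow> cell set" where
  "clar_hexagons S C = {h\<in>S. \<exists>v\<in>hs_verts S.
      comp C v = cell_verts h \<and> comp_edges C v = cell_edges h}"

definition clar_single_edges :: "cell set \<Rightarrow> vert set set \<Rightarrow> vert set set" where
  "clar_single_edges S C = {e. \<exists>v\<in>hs_verts S. \<exists>a b. a \<noteq> b \<and> e = {a,b} \<and>
      comp C v = {a,b} \<and> comp_edges C v = {{a,b}}}"

definition res_adj :: "cell set \<Rightarrow> vert set set \<Rightarrow> vert set set \<Rightarrow> bool" where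
  "res_adj S M M' \<longleftrightarrow> perfect_matching S M \<and> perfect_matching S M' \<and>
     (\<exists>h\<in>S. (M - M') \<union> (M' - M) = cell_edges h)"

text \<open>f(C): induced subgraph of R(H), given as (vertex set, edge set).\<close>
definition f_verts :: "cell set \<Rightarrow> vert set set \<Rightarrow> vert set set set" where
  "f_verts S C = {M. perfect_matching S M \<and>
      (\<forall>h\<in>clar_hexagons S C. alternating M h) \<and>
      (\<forall>e\<in>clar_single_edges S C. e \<in> M)}"

definition f_map :: "cell set \<Rightarrow> vert set set \<Rightarrow>
    vert set set set \<times> (vert set set \<times> vert set set) set" where
  "f_map S C = (f_verts S C,
      {(M, M'). M \<in> f_verts S C \<and> M' \<in> f_verts S C \<and> res_adj S M M'})"

end

theory Submission imports Defs begin
lemma cell_verts_card: "card (cell_verts h) = 6"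
  by (cases h) (simp add: cell_verts_def cell_cycle_def)
lemma cell_verts_inj: "cell_verts h = cell_verts h' \<Longrightarrow> h = h'"
proof -
  assume a: "cell_verts h = cell_verts h'"
  obtain x y where h: "h = (x,y)" by (cases h)
  obtain x' y' where h': "h' = (x',y')" by (cases h')
  have "(x,y) \<in> cell_verts h" unfolding h by (simp add: cell_verts_def cell_cycle_def Let_def)
  hence 1: "(x,y) \<in> cell_verts h'" using a by simp
  have "(x',y') \<in> cell_verts h'" unfolding h' by (simp add: cell_verts_def cell_cycle_def Let_def)
  hence 2: "(x',y') \<in> cell_verts h" using a by simp
  show ?thesis using 1 2 unfolding h h' by (auto simp: cell_verts_def cell_cycle_def Let_def)
qed
lemma cell_edge_mod: "cell_edge h (k mod 6) = cell_edge h k"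
  by (simp add: cell_edge_def mod_Suc_eq)
lemma six_cases: "(i::nat) < 6 \<Longrightarrow> i = 0 \<or> i = 1 \<or> i = 2 \<or> i = 3 \<or> i = 4 \<or> i = 5" by arith
lemma cell_edge_inj: "i < 6 \<Longrightarrow> j < 6 \<Longrightarrow> cell_edge h i = cell_edge h j \<Longrightarrow> i = j"
  apply (cases h)
  apply (drule six_cases)+
  apply (elim disjE; simp add: cell_edge_def cell_cycle_def doubleton_eq_iff)
  done
lemma cell_edge_disj: "i < 6 \<Longrightarrow> j < 6 \<Longrightarrow> even i = even j \<Longrightarrow> v \<in> cell_edge h i \<Longrightarrow> v \<in> cell_edge h j \<Longrightarrow> i = j"
  apply (cases h)
  apply (drule six_cases)+
  apply (elim disjE; auto simp add: cell_edge_def cell_cycle_def)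
  done
lemma cell_edge_sub: "cell_edge h i \<subseteq> cell_verts h"
proof -
  have "length (cell_cycle h) = 6" by (simp add: cell_cycle_def Let_def)
  thus ?thesis by (auto simp: cell_edge_def cell_verts_def intro!: nth_mem)
qed
lemma cell_edge_two: "\<exists>p q. cell_edge h i = {p,q}"
  unfolding cell_edge_def by blast
lemma cell_vert_edges: "v \<in> cell_verts h \<Longrightarrow> \<exists>i<6. v \<in> cell_edge h i \<and> v \<in> cell_edge h (Suc i)"
proof -
  assume "v \<in> cell_verts h"
  moreover have "length (cell_cycle h) = 6" by (simp add: cell_cycle_def Let_def)
  ultimately obtain k where k: "k < 6" "v = cell_cycle h ! k"
    by (auto simp: cell_verts_def in_set_conv_nth)
  show ?thesis
    using six_cases[OF k(1)] k(2)
    apply (elim disjE)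
    apply (rule exI[of _ 5]; simp add: cell_edge_def cell_cycle_def Let_def)
    apply (rule exI[of _ 0]; simp add: cell_edge_def cell_cycle_def Let_def)
    apply (rule exI[of _ 1]; simp add: cell_edge_def cell_cycle_def Let_def)
    apply (rule exI[of _ 2]; simp add: cell_edge_def cell_cycle_def Let_def)
    apply (rule exI[of _ 3]; simp add: cell_edge_def cell_cycle_def Let_def)
    apply (rule exI[of _ 4]; simp add: cell_edge_def cell_cycle_def Let_def)
    done
qed
lemma sym_er: "sym (edge_rel C)" unfolding sym_def edge_rel_def by (auto simp: insert_commute)
lemma comp_refl: "v \<in> comp C v" by (simp add: comp_def)
lemma comp_eq: assumes "x \<in> comp C v" "x \<in> comp C w" shows "comp C v = comp C w"
proof -
  have s: "sym ((edge_rel C)\<^sup>*)" by (rule sym_rtrancl[OF sym_er])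
  have vx: "(v,x) \<in> (edge_rel C)\<^sup>*" "(w,x) \<in> (edge_rel C)\<^sup>*" using assms by (auto simp: comp_def)
  hence "(x,w) \<in> (edge_rel C)\<^sup>*" using s by (meson symD)
  hence vw: "(v,w) \<in> (edge_rel C)\<^sup>*" using vx by (meson rtrancl_trans)
  hence wv: "(w,v) \<in> (edge_rel C)\<^sup>*" using s by (meson symD)
  show ?thesis unfolding comp_def using vw wv by (meson rtrancl_trans)
qed
lemma edge_comp: assumes "e \<in> C" "e = {p,q}" "v \<in> e" shows "e \<subseteq> comp C v"
proof
  fix x assume "x \<in> e"
  show "x \<in> comp C v"
  proof (cases "x = v")
    case True thus ?thesis by (simp add: comp_refl)
  next
    case False
    have "e = {v,x}" using assms \<open>x \<in> e\<close> False by auto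
    hence "(v,x) \<in> edge_rel C" using assms False by (simp add: edge_rel_def)
    thus ?thesis by (simp add: comp_def)
  qed
qed
lemma hs_edge_char: "e \<in> hs_edges S \<Longrightarrow> \<exists>c\<in>S. \<exists>i<6. e = cell_edge c i"
  by (auto simp: hs_edges_def cell_edges_def)
lemma hs_edge_sub: "e \<in> hs_edges S \<Longrightarrow> e \<subseteq> hs_verts S"
  using cell_edge_sub by (fastforce simp: hs_edges_def cell_edges_def hs_verts_def)
lemma hs_edge_two: "e \<in> hs_edges S \<Longrightarrow> \<exists>p q. e = {p,q}"
  using cell_edge_two by (auto simp: hs_edges_def cell_edges_def)
lemma comp_edges_sub: "comp_edges C v \<subseteq> C" by (auto simp: comp_edges_def)
lemma cell_edge_ne: "cell_edge h i \<noteq> {}" by (simp add: cell_edge_def)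
lemma cell_edge_in: "cell_edge h k \<in> cell_edges h"
  unfolding cell_edges_def by (rule CollectI, rule exI[of _ "k mod 6"]) (simp add: cell_edge_mod)
lemma parity_suc: "i < 6 \<Longrightarrow> even (Suc i mod 6) \<longleftrightarrow> \<not> even (i::nat)"
  by (drule six_cases) auto

definition Mp :: "cell set \<Rightarrow> vert set set \<Rightarrow> (cell \<Rightarrow> bool) \<Rightarrow> vert set set" where
  "Mp S C p = clar_single_edges S C \<union>
     (\<Union>h\<in>clar_hexagons S C. {cell_edge h i | i. i < 6 \<and> (even i = p h)})"

context
  fixes S C assumes cc: "clar_cover S C"
begin

lemma C_sub: "C \<subseteq> hs_edges S" using cc by (simp add: clar_cover_def)

lemma F1: "clar_single_edges S C \<subseteq> C"
proof
  fix e assume "e \<in> clar_single_edges S C"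
  then obtain v a b where "e = {a,b}" "comp_edges C v = {{a,b}}"
    unfolding clar_single_edges_def by blast
  thus "e \<in> C" using comp_edges_sub[of C v] by blast
qed

lemma F2: "h \<in> clar_hexagons S C \<Longrightarrow> h \<in> S \<and> cell_edges h \<subseteq> C \<and> (\<exists>v. comp C v = cell_verts h)"
proof -
  assume "h \<in> clar_hexagons S C"
  then obtain v where "h \<in> S" "comp C v = cell_verts h" "comp_edges C v = cell_edges h"
    unfolding clar_hexagons_def by blast
  thus ?thesis using comp_edges_sub[of C v] by blast
qed

lemma F3: assumes v: "v \<in> hs_verts S" shows
   "(\<exists>h\<in>clar_hexagons S C. comp C v = cell_verts h \<and> comp_edges C v = cell_edges h) \<or>
   (\<exists>a b. a \<noteq> b \<and> comp C v = {a,b} \<and> comp_edges C v = {{a,b}} \<and> {a,b} \<in> clar_single_edges S C)"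
proof -
  have "(\<exists>h\<in>S. comp C v = cell_verts h \<and> comp_edges C v = cell_edges h) \<or>
        (\<exists>a b. a \<noteq> b \<and> comp C v = {a,b} \<and> comp_edges C v = {{a,b}})"
    using cc v unfolding clar_cover_def by blast
  thus ?thesis
  proof (elim disjE bexE exE conjE)
    fix h assume "h \<in> S" "comp C v = cell_verts h" "comp_edges C v = cell_edges h"
    hence "h \<in> clar_hexagons S C" using v unfolding clar_hexagons_def by blast
    thus ?thesis using \<open>comp C v = cell_verts h\<close> \<open>comp_edges C v = cell_edges h\<close> by blast
  next
    fix a b assume ab: "a \<noteq> b" "comp C v = {a,b}" "comp_edges C v = {{a,b}}"
    hence "{a,b} \<in> clar_single_edges S C" using v unfolding clar_single_edges_def by blast
    thus ?thesis using ab by blast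
  qed
qed

lemma F4: assumes "h \<in> clar_hexagons S C" "e \<in> clar_single_edges S C" "x \<in> cell_verts h" "x \<in> e"
  shows False
proof -
  obtain v where v: "comp C v = cell_verts h" using F2 assms(1) by blast
  obtain w a b where w: "comp C w = {a,b}" "e = {a,b}" using assms(2) by (auto simp: clar_single_edges_def)
  have "comp C v = comp C w" using comp_eq[of x C v w] assms v w by simp
  hence "cell_verts h = {a,b}" using v w by simp
  moreover have "card {a,b} \<le> 2" by (cases "a = b") auto
  ultimately have "card (cell_verts h) \<le> 2" by simp
  thus False by (simp add: cell_verts_card)
qed

lemma F5: assumes "h \<in> clar_hexagons S C" "h' \<in> clar_hexagons S C" "x \<in> cell_verts h" "x \<in> cell_verts h'"
  shows "h = h'"
proof -
  obtain v where v: "comp C v = cell_verts h" using F2 assms(1) by blast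
  obtain w where w: "comp C w = cell_verts h'" using F2 assms(2) by blast
  have "comp C v = comp C w" using comp_eq[of x C v w] assms v w by simp
  thus ?thesis using v w cell_verts_inj by simp
qed

lemma F6: assumes "e1 \<in> clar_single_edges S C" "e2 \<in> clar_single_edges S C" "x \<in> e1" "x \<in> e2"
  shows "e1 = e2"
proof -
  obtain v where v: "comp C v = e1" using assms(1) by (auto simp: clar_single_edges_def)
  obtain w where w: "comp C w = e2" using assms(2) by (auto simp: clar_single_edges_def)
  show ?thesis using comp_eq[of x C v w] assms v w by simp
qed

lemma M1: assumes "h \<in> clar_hexagons S C" "j < 6"
  shows "cell_edge h j \<in> Mp S C p \<longleftrightarrow> even j = p h"
proof
  assume "cell_edge h j \<in> Mp S C p"
  then consider "cell_edge h j \<in> clar_single_edges S C"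
    | h' i where "h' \<in> clar_hexagons S C" "i < 6" "even i = p h'" "cell_edge h j = cell_edge h' i"
    unfolding Mp_def by blast
  thus "even j = p h"
  proof cases
    case 1
    obtain x where "x \<in> cell_edge h j" using cell_edge_ne by blast
    thus ?thesis using F4[OF assms(1) 1] cell_edge_sub by blast
  next
    case 2
    obtain x where x: "x \<in> cell_edge h j" using cell_edge_ne by blast
    have "h = h'" using F5[OF assms(1) 2(1), of x] x 2(4) cell_edge_sub by blast
    hence "j = i" using cell_edge_inj[OF assms(2) 2(2), of h] 2(4) by simp
    thus ?thesis using 2 \<open>h = h'\<close> by simp
  qed
next
  assume "even j = p h" thus "cell_edge h j \<in> Mp S C p" using assms unfolding Mp_def by blast
qed

lemma M2: "Mp S C p \<subseteq> C"
  using F1 F2 cell_edge_in unfolding Mp_def by blast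

lemma M3: "Mp S C p \<in> f_verts S C"
proof -
  have pm: "perfect_matching S (Mp S C p)"
    unfolding perfect_matching_def
  proof (intro conjI ballI)
    show "Mp S C p \<subseteq> hs_edges S" using M2 C_sub by blast
  next
    fix v assume v: "v \<in> hs_verts S"
    have ex: "\<exists>e. e \<in> Mp S C p \<and> v \<in> e"
      using F3[OF v]
    proof (elim disjE exE conjE bexE)
      fix h assume h: "h \<in> clar_hexagons S C" "comp C v = cell_verts h"
      then obtain i where i: "i < 6" "v \<in> cell_edge h i" "v \<in> cell_edge h (Suc i)"
        using cell_vert_edges comp_refl by metis
      show ?thesis
      proof (cases "even i = p h")
        case True thus ?thesis using M1[OF h(1) i(1)] i by blast
      next
        case False
        hence "even (Suc i mod 6) = p h" using parity_suc[OF i(1)] by simp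
        hence "cell_edge h (Suc i mod 6) \<in> Mp S C p" using M1[OF h(1)] by simp
        thus ?thesis using i cell_edge_mod by metis
      qed
    next
      fix a b assume "comp C v = {a,b}" "{a,b} \<in> clar_single_edges S C"
      thus ?thesis using comp_refl[of v C] unfolding Mp_def by blast
    qed
    have un: "e1 = e2" if e1: "e1 \<in> Mp S C p" "v \<in> e1" and e2: "e2 \<in> Mp S C p" "v \<in> e2" for e1 e2
    proof -
      consider "e1 \<in> clar_single_edges S C"
        | h1 i1 where "h1 \<in> clar_hexagons S C" "i1 < 6" "even i1 = p h1" "e1 = cell_edge h1 i1"
        using e1 unfolding Mp_def by blast
      note c1 = this
      consider "e2 \<in> clar_single_edges S C"
        | h2 i2 where "h2 \<in> clar_hexagons S C" "i2 < 6" "even i2 = p h2" "e2 = cell_edge h2 i2"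
        using e2 unfolding Mp_def by blast
      note c2 = this
      show ?thesis
      proof (cases rule: c1)
        case 1
        note s1 = 1
        show ?thesis
        proof (cases rule: c2)
          case 1 thus ?thesis using F6 s1 e1 e2 by blast
        next
          case 2 thus ?thesis using F4[OF 2(1) s1, of v] e1 e2 cell_edge_sub by blast
        qed
      next
        case h1: 2
        show ?thesis
        proof (cases rule: c2)
          case 1 thus ?thesis using F4[OF h1(1) 1, of v] e1 e2 h1 cell_edge_sub by blast
        next
          case 2
          have "h1 = h2" using F5[OF h1(1) 2(1), of v] e1 e2 h1 2 cell_edge_sub by blast
          thus ?thesis using cell_edge_disj[OF h1(2) 2(2), of v h1] h1 2 e1 e2 by simp
        qed
      qed
    qed
    show "\<exists>!e. e \<in> Mp S C p \<and> v \<in> e" using ex un by blast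
  qed
  have alt: "alternating (Mp S C p) h" if h: "h \<in> clar_hexagons S C" for h
    unfolding alternating_def
  proof (intro allI impI)
    fix i :: nat assume i: "i < 6"
    have "cell_edge h (Suc i) = cell_edge h (Suc i mod 6)" by (simp add: cell_edge_mod)
    thus "(cell_edge h i \<in> Mp S C p) = (cell_edge h (Suc i) \<notin> Mp S C p)"
      using M1[OF h i] M1[OF h, of "Suc i mod 6"] parity_suc[OF i] by auto
  qed
  show ?thesis unfolding f_verts_def using pm alt by (auto simp: Mp_def)
qed

lemma U1: assumes "M \<in> f_verts S C" shows "M \<subseteq> C"
proof
  fix e assume e: "e \<in> M"
  have pm: "perfect_matching S M" and alt: "\<forall>h\<in>clar_hexagons S C. alternating M h"
    and sg: "\<forall>e\<in>clar_single_edges S C. e \<in> M" using assms by (auto simp: f_verts_def)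
  have ehs: "e \<in> hs_edges S" using pm e by (auto simp: perfect_matching_def)
  obtain p q where pq: "e = {p,q}" using hs_edge_two[OF ehs] by blast
  have x: "p \<in> hs_verts S" using hs_edge_sub[OF ehs] pq by auto
  have uq: "\<And>e'. e' \<in> M \<Longrightarrow> p \<in> e' \<Longrightarrow> e' = e"
    using pm x e pq unfolding perfect_matching_def by blast
  show "e \<in> C"
    using F3[OF x]
  proof (elim disjE exE conjE bexE)
    fix h assume h: "h \<in> clar_hexagons S C" "comp C p = cell_verts h"
    then obtain i where i: "i < 6" "p \<in> cell_edge h i" "p \<in> cell_edge h (Suc i)"
      using cell_vert_edges comp_refl by metis
    have "cell_edge h i \<in> M \<or> cell_edge h (Suc i) \<in> M"
      using alt h(1) i(1) unfolding alternating_def by blast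
    hence "e \<in> cell_edges h" using uq i cell_edge_in by metis
    thus ?thesis using F2[OF h(1)] by blast
  next
    fix a b assume ab: "comp C p = {a,b}" "{a,b} \<in> clar_single_edges S C"
    hence "{a,b} \<in> M" "p \<in> {a,b}" using sg comp_refl[of p C] by auto
    hence "e = {a,b}" using uq by blast
    thus ?thesis using F1 ab(2) by blast
  qed
qed

lemma U2: assumes "e \<in> C" shows "\<exists>M\<in>f_verts S C. e \<in> M"
proof -
  have ehs: "e \<in> hs_edges S" using assms C_sub by blast
  obtain p q where pq: "e = {p,q}" using hs_edge_two[OF ehs] by blast
  have x: "p \<in> hs_verts S" using hs_edge_sub[OF ehs] pq by auto
  have "e \<subseteq> comp C p" using edge_comp[OF assms pq] pq by simp
  hence ec: "e \<in> comp_edges C p" using assms by (simp add: comp_edges_def)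
  show ?thesis
    using F3[OF x]
  proof (elim disjE exE conjE bexE)
    fix h assume h: "h \<in> clar_hexagons S C" "comp_edges C p = cell_edges h"
    then obtain i where i: "i < 6" "e = cell_edge h i" using ec by (auto simp: cell_edges_def)
    have "e \<in> Mp S C (\<lambda>_. even i)" using M1[OF h(1) i(1)] i by simp
    thus ?thesis using M3 by blast
  next
    fix a b assume "comp_edges C p = {{a,b}}" "{a,b} \<in> clar_single_edges S C"
    hence "e \<in> Mp S C (\<lambda>_. True)" using ec by (simp add: Mp_def)
    thus ?thesis using M3 by blast
  qed
qed

lemma Union_f: "\<Union> (f_verts S C) = C"
proof
  show "\<Union> (f_verts S C) \<subseteq> C" using U1 by (rule Union_least)
  show "C \<subseteq> \<Union> (f_verts S C)"
  proof
    fix e assume "e \<in> C"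
    then obtain M where "M \<in> f_verts S C" "e \<in> M" using U2 by blast
    thus "e \<in> \<Union> (f_verts S C)" by (rule UnionI)
  qed
qed

end

theorem lemma2:
  fixes S :: "cell set" and n :: nat
  assumes "hexagonal_system S" and "kekulean S"
  shows "inj_on (f_map S) {C. clar_cover S C \<and> card (clar_hexagons S C) = n}"
proof (rule inj_onI)
  fix C1 C2 assume c1: "C1 \<in> {C. clar_cover S C \<and> card (clar_hexagons S C) = n}"
    and c2: "C2 \<in> {C. clar_cover S C \<and> card (clar_hexagons S C) = n}"
    and eq: "f_map S C1 = f_map S C2"
  have "fst (f_map S C1) = fst (f_map S C2)" using eq by (rule arg_cong)
  hence fe: "f_verts S C1 = f_verts S C2" unfolding f_map_def fst_conv .
  have u1: "\<Union> (f_verts S C1) = C1" using c1 by (intro Union_f) simp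
  have u2: "\<Union> (f_verts S C2) = C2" using c2 by (intro Union_f) simp
  have "C1 = \<Union> (f_verts S C1)" using u1 by (rule sym)
  also have "\<dots> = \<Union> (f_verts S C2)" using fe by (rule arg_cong)
  also have "\<dots> = C2" by (rule u2)
  finally show "C1 = C2" .
qed
end
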